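(* Let $n$ be an odd positive integer, $n_1=\lceil n/2\rceil$, $n_0=\lfloor n/2\rfloor$, and let $k\in K=\mathrm{GL}_2(\mathfrak{o})$. Then (1) $l(k\,a(\varpi^{n_1}))\ge n_1$ if and only if $k\in N(\mathfrak{o})K^0(\mathfrak{p})$; (2) $l(k\,a(\varpi^{n_1}))\le n_0$ if and only if $k\in wK^0(\mathfrak{p})$.
   Context: $F$ is a non-archimedean local field of characteristic $0$ with ring of integers $\mathfrak{o}$, maximal ideal $\mathfrak{p}$, uniformizer $\varpi$, residue field of size $q$, valuation $v$; $U_j=\{x\in\mathfrak{o}^\times: v(x-1)\ge j\}$ ($U_0=\mathfrak o^\times$). $G=\mathrm{GL}_2(F)$, $K=\mathrm{GL}_2(\mathfrak{o})$, $w=\begin{pmatrix}0&1\\-1&0\end{pmatrix}$, $a(y)=\mathrm{diag}(y,1)$, $n(x)=\begin{pmatrix}1&x\\0&1\end{pmatrix}$, $Z$ the center, $N=\{n(x):x\in F\}$, $N(\mathfrak o)=\{n(x):x\in\mathfrak o\}$, $K_1(\mathfrak{p}^n)=K\cap\begin{pmatrix}1+\mathfrak{p}^n&\mathfrak{o}\\\mathfrak{p}^n&\mathfrak{o}\end{pmatrix}$, $K^0(\mathfrak{p})=K\cap\begin{pmatrix}\mathfrak{o}&\mathfrak{p}\\\mathfrak{o}&\mathfrak{o}\end{pmatrix}$. There is a disjoint decomposition $G=\bigsqcup_{t\in\mathbb{Z}}\bigsqcup_{0\le l\le n}\bigsqcup_{v\in\mathfrak{o}^\times/U_{\min(l,n-l)}}ZN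 a(\varpi^t)wn(\varpi^{-l}v)K_1(\mathfrak{p}^n)$; for $g\in G$, $t(g)$ and $l(g)$ denote the unique integers with $0\le l(g)\le n$ and $g\in ZNa(\varpi^{t(g)})wn(\varpi^{-l(g)}v)K_1(\mathfrak{p}^n)$ for some $v\in\mathfrak{o}^\times$. *)

theory Defs
  imports Main
begin

text \<open>The field F is a type of class field_char_0 (characteristic 0), equipped with a
normalized discrete valuation val (only meaningful on nonzero elements; v(0)=+infinity is
encoded by explicit guards x = 0).\<close>

definition discrete_valuation :: "('a::field \<Rightarrow> int) \<Rightarrow> bool" where
  "discrete_valuation val \<longleftrightarrow>
     (\<forall>x y. x \<noteq> 0 \<longrightarrow> y \<noteq> 0 \<longrightarrow> val (x * y) = val x + val y) \<and>
     (\<forall>x y. x \<noteq> 0 \<longrightarrow> y \<noteq> 0 \<longrightarrow> x + y \<noteq> 0 \<longrightarrow> min (val x) (val y) \<le> val (x + y)) \<and>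
     (\<exists>x. x \<noteq> 0 \<and> val x = 1)"

definition pideal :: "('a::field \<Rightarrow> int) \<Rightarrow> int \<Rightarrow> 'a set" where
  "pideal val j = {x. x = 0 \<or> j \<le> val x}"

definition ointegers :: "('a::field \<Rightarrow> int) \<Rightarrow> 'a set" where
  "ointegers val = pideal val 0"

definition ounits :: "('a::field \<Rightarrow> int) \<Rightarrow> 'a set" where
  "ounits val = {x. x \<noteq> 0 \<and> val x = 0}"

definition val_cauchy :: "('a::field \<Rightarrow> int) \<Rightarrow> (nat \<Rightarrow> 'a) \<Rightarrow> bool" where
  "val_cauchy val s \<longleftrightarrow> (\<forall>M. \<exists>N. \<forall>i\<ge>N. \<forall>j\<ge>N. s i - s j \<in> pideal val M)"

definition val_converges :: "('a::field \<Rightarrow> int) \<Rightarrow> (nat \<Rightarrow> 'a) \<Rightarrow> 'a \<Rightarrow> bool" where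
  "val_converges val s L \<longleftrightarrow> (\<forall>M. \<exists>N. \<forall>i\<ge>N. s i - L \<in> pideal val M)"

definition nonarch_local_field :: "('a::field_char_0 \<Rightarrow> int) \<Rightarrow> bool" where
  "nonarch_local_field val \<longleftrightarrow>
     discrete_valuation val \<and>
     (\<forall>s. val_cauchy val s \<longrightarrow> (\<exists>L. val_converges val s L)) \<and>
     (\<exists>R. finite R \<and> R \<subseteq> ointegers val \<and>
          (\<forall>x\<in>ointegers val. \<exists>r\<in>R. x - r \<in> pideal val 1))"

datatype 'a m2 = M2 'a 'a 'a 'a


fun mm :: "'a::ring m2 \<Rightarrow> 'a m2 \<Rightarrow> 'a m2" (infixl "\<cdot>\<^sub>m" 70) where
  "mm (M2 a b c d) (M2 e f g h) = M2 (a*e + b*g) (a*f + b*h) (c*e + d*g) (c*f + d*h)"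

fun mdet :: "'a::comm_ring m2 \<Rightarrow> 'a" where
  "mdet (M2 a b c d) = a*d - b*c"

definition GL2 :: "'a::field m2 set" where
  "GL2 = {g. mdet g \<noteq> 0}"

definition wmat :: "'a::comm_ring_1 m2" where
  "wmat = M2 0 1 (-1) 0"

definition amat :: "'a::comm_ring_1 \<Rightarrow> 'a m2" where
  "amat y = M2 y 0 0 1"

definition nmat :: "'a::comm_ring_1 \<Rightarrow> 'a m2" where
  "nmat x = M2 1 x 0 1"

definition zmat :: "'a::comm_ring_1 \<Rightarrow> 'a m2" where
  "zmat z = M2 z 0 0 z"

definition Kmax :: "('a::field \<Rightarrow> int) \<Rightarrow> 'a m2 set" where
  "Kmax val = {M2 a b c d | a b c d.
      a \<in> ointegers val \<and> b \<in> ointegers val \<and> c \<in> ointegers val \<and> d \<in> ointegers val \<and>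
      a*d - b*c \<in> ounits val}"

definition K1 :: "('a::field \<Rightarrow> int) \<Rightarrow> nat \<Rightarrow> 'a m2 set" where
  "K1 val n = {M2 a b c d | a b c d. M2 a b c d \<in> Kmax val \<and>
      a - 1 \<in> pideal val (int n) \<and> c \<in> pideal val (int n)}"

definition K0p :: "('a::field \<Rightarrow> int) \<Rightarrow> 'a m2 set" where
  "K0p val = {M2 a b c d | a b c d. M2 a b c d \<in> Kmax val \<and> b \<in> pideal val 1}"

definition NoK0p :: "('a::field \<Rightarrow> int) \<Rightarrow> 'a m2 set" where
  "NoK0p val = {nmat x \<cdot>\<^sub>m k | x k. x \<in> ointegers val \<and> k \<in> K0p val}"

definition wK0p :: "('a::field \<Rightarrow> int) \<Rightarrow> 'a m2 set" where
  "wK0p val = {wmat \<cdot>\<^sub>m k | k. k \<in> K0p val}"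

definition in_cell :: "('a::field \<Rightarrow> int) \<Rightarrow> 'a \<Rightarrow> nat \<Rightarrow> int \<Rightarrow> nat \<Rightarrow> 'a m2 \<Rightarrow> bool" where
  "in_cell val uf n t l g \<longleftrightarrow>
     (\<exists>z x v k. z \<noteq> 0 \<and> v \<in> ounits val \<and> k \<in> K1 val n \<and>
        g = zmat z \<cdot>\<^sub>m nmat x \<cdot>\<^sub>m amat (uf powi t) \<cdot>\<^sub>m wmat
              \<cdot>\<^sub>m nmat (uf powi (- int l) * v) \<cdot>\<^sub>m k)"

definition lval :: "('a::field \<Rightarrow> int) \<Rightarrow> 'a \<Rightarrow> nat \<Rightarrow> 'a m2 \<Rightarrow> nat" where
  "lval val uf n g = (THE l. l \<le> n \<and> (\<exists>t. in_cell val uf n t l g))"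

definition tval :: "('a::field \<Rightarrow> int) \<Rightarrow> 'a \<Rightarrow> nat \<Rightarrow> 'a m2 \<Rightarrow> int" where
  "tval val uf n g = (THE t. \<exists>l. l \<le> n \<and> in_cell val uf n t l g)"

end

theory Submission imports Defs begin

locale dv =
  fixes val :: "'a::field \<Rightarrow> int"
  assumes dval: "discrete_valuation val"
begin

lemma vmult: "x \<noteq> 0 \<Longrightarrow> y \<noteq> 0 \<Longrightarrow> val (x*y) = val x + val y"
  using dval unfolding discrete_valuation_def by blast

lemma vadd: "x \<noteq> 0 \<Longrightarrow> y \<noteq> 0 \<Longrightarrow> x + y \<noteq> 0 \<Longrightarrow> min (val x) (val y) \<le> val (x + y)"
  using dval unfolding discrete_valuation_def by blast

lemma v1[simp]: "val 1 = 0"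
  using vmult[of 1 1] by simp

lemma vm1: "val (-1) = 0"
  using vmult[of "-1" "-1"] by simp

lemma vneg[simp]: "val (-x) = val x"
proof (cases "x = 0")
  case False
  then show ?thesis using vmult[of "-1" x] vm1 by simp
qed simp

lemma vinv: "x \<noteq> 0 \<Longrightarrow> val (inverse x) = - val x"
  using vmult[of x "inverse x"] by simp

lemma vdiv: "x \<noteq> 0 \<Longrightarrow> y \<noteq> 0 \<Longrightarrow> val (x / y) = val x - val y"
  by (simp add: divide_inverse vmult vinv)

lemma vpow: "x \<noteq> 0 \<Longrightarrow> val (x ^ m) = int m * val x"
  by (induction m) (auto simp: vmult algebra_simps)

lemma vpowi: "x \<noteq> 0 \<Longrightarrow> val (x powi i) = i * val x"
  by (cases i rule: int_cases4) (auto simp: power_int_minus vinv vpow)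

lemma vstrict: assumes "x \<noteq> 0" "y = 0 \<or> val x < val y"
  shows "x + y \<noteq> 0 \<and> val (x + y) = val x"
proof (cases "y = 0")
  case False
  with assms have lt: "val x < val y" by auto
  have ne: "x + y \<noteq> 0"
  proof
    assume "x + y = 0" then have "y = -x" by (simp add: add_eq_0_iff)
    with lt show False by simp
  qed
  have "min (val x) (val y) \<le> val (x+y)" using vadd[OF assms(1) False ne] .
  hence ge: "val x \<le> val (x+y)" using lt by simp
  have "min (val (x+y)) (val (-y)) \<le> val (x + y + - y)"
    using vadd[of "x+y" "-y"] ne False assms(1) by simp
  hence "min (val (x+y)) (val y) \<le> val x" by simp
  hence "val (x+y) \<le> val x" using lt by linarith
  with ge ne show ?thesis by simp
qed (use assms in simp)

lemma padd: assumes "x \<in> pideal val j" "y \<in> pideal val j" shows "x + y \<in> pideal val j"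
proof (cases "x = 0 \<or> y = 0 \<or> x + y = 0")
  case True
  then show ?thesis using assms by (auto simp: pideal_def)
next
  case False
  then have "min (val x) (val y) \<le> val (x + y)" using vadd[of x y] by blast
  moreover have "j \<le> val x" "j \<le> val y" using assms False by (auto simp: pideal_def)
  ultimately have "j \<le> val (x + y)" by (auto simp: min_def split: if_splits)
  then show ?thesis by (simp add: pideal_def)
qed

lemma pneg: "x \<in> pideal val j \<Longrightarrow> - x \<in> pideal val j"
  unfolding pideal_def by simp

lemma pdiff: "x \<in> pideal val j \<Longrightarrow> y \<in> pideal val j \<Longrightarrow> x - y \<in> pideal val j"
proof -
  assume a: "x \<in> pideal val j" "y \<in> pideal val j"
  have "x + - y \<in> pideal val j" by (rule padd[OF a(1) pneg[OF a(2)]])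
  thus ?thesis by simp
qed

lemma pmult: "x \<in> pideal val i \<Longrightarrow> y \<in> pideal val j \<Longrightarrow> x * y \<in> pideal val (i+j)"
  unfolding pideal_def by (cases "x=0"; cases "y=0"; auto simp: vmult)

lemma pmono: "x \<in> pideal val i \<Longrightarrow> j \<le> i \<Longrightarrow> x \<in> pideal val j"
  unfolding pideal_def by auto

lemma unit_not_p1: "x \<in> ounits val \<Longrightarrow> x \<notin> pideal val 1"
  unfolding ounits_def pideal_def by auto

lemma o_split: "x \<in> ointegers val \<Longrightarrow> x \<in> ounits val \<or> x \<in> pideal val 1"
  unfolding ounits_def pideal_def ointegers_def by auto

lemma unit_plus_p: "x \<in> ounits val \<Longrightarrow> y \<in> pideal val 1 \<Longrightarrow> x + y \<in> ounits val"
  using vstrict[of x y] unfolding ounits_def pideal_def by auto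

lemma prod_unit: "x \<in> ointegers val \<Longrightarrow> y \<in> ointegers val \<Longrightarrow> x * y \<in> ounits val \<Longrightarrow> x \<in> ounits val \<and> y \<in> ounits val"
  unfolding ounits_def ointegers_def pideal_def by (auto simp: vmult)


lemma unit1: "1 \<in> ounits val" by (simp add: ounits_def)

lemma unit_int: "x \<in> ounits val \<Longrightarrow> x \<in> ointegers val"
  by (simp add: ounits_def ointegers_def pideal_def)

definition cellP :: "nat \<Rightarrow> nat \<Rightarrow> 'a \<Rightarrow> 'a \<Rightarrow> bool" where
  "cellP n l C D \<longleftrightarrow> (l = 0 \<and> C \<noteq> 0 \<and> (D = 0 \<or> val C \<le> val D)) \<or>
     (l = n \<and> D \<noteq> 0 \<and> (C = 0 \<or> val C \<ge> val D + int n)) \<or>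
     (0 < l \<and> l < n \<and> C \<noteq> 0 \<and> D \<noteq> 0 \<and> val C = val D + int l)"

lemma cellP_unique: "0 < n \<Longrightarrow> cellP n l C D \<Longrightarrow> cellP n l' C D \<Longrightarrow> l = l'"
  unfolding cellP_def by auto

end

lemma prod_eq: "zmat z \<cdot>\<^sub>m nmat x \<cdot>\<^sub>m amat y \<cdot>\<^sub>m wmat \<cdot>\<^sub>m nmat u \<cdot>\<^sub>m M2 a1 b1 c1 d1 =
   M2 (-z*x*a1 + z*(y - x*u)*c1) (-z*x*b1 + z*(y-x*u)*d1) (-z*(a1+u*c1)) (-z*(b1+u*d1))"
  by (simp add: zmat_def nmat_def amat_def wmat_def algebra_simps)

lemma prod_det: "mdet (M2 (-z*x*a1 + z*(y - x*u)*c1) (-z*x*b1 + z*(y-x*u)*d1) (-z*(a1+u*c1)) (-z*(b1+u*d1)))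
   = (z::'a::comm_ring_1)^2 * y * (a1*d1 - b1*c1)"
  by (simp add: algebra_simps power2_eq_square)

lemma match_A: "mdet (M2 A B C (D::'a::field)) = mdet (M2 A' B' C D) \<Longrightarrow> B = B' \<Longrightarrow> D \<noteq> 0 \<Longrightarrow> M2 A B C D = M2 A' B' C D"
  by simp

lemma match_B: "mdet (M2 A B C (D::'a::field)) = mdet (M2 A' B' C D) \<Longrightarrow> A = A' \<Longrightarrow> C \<noteq> 0 \<Longrightarrow> M2 A B C D = M2 A' B' C D"
  by simp


context dv begin

lemma K1_facts: assumes "M2 a1 b1 c1 d1 \<in> K1 val n" "0 < n"
  shows "a1 \<in> ounits val" "d1 \<in> ounits val" "b1 \<in> ointegers val" "c1 \<in> pideal val (int n)"
    "a1*d1 - b1*c1 \<in> ounits val"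
proof -
  from assms(1) have k: "a1 \<in> ointegers val" "b1 \<in> ointegers val" "c1 \<in> ointegers val" "d1 \<in> ointegers val"
    "a1*d1 - b1*c1 \<in> ounits val" "a1 - 1 \<in> pideal val (int n)" "c1 \<in> pideal val (int n)"
    unfolding K1_def Kmax_def by auto
  show "b1 \<in> ointegers val" "c1 \<in> pideal val (int n)" "a1*d1 - b1*c1 \<in> ounits val" using k by auto
  have "a1 - 1 \<in> pideal val 1" using pmono[OF k(6)] assms(2) by simp
  from unit_plus_p[OF unit1 this] show a1: "a1 \<in> ounits val" by simp
  have "b1*c1 \<in> pideal val (0 + int n)" using pmult[OF k(2)[unfolded ointegers_def] k(7)] .
  hence "b1*c1 \<in> pideal val (int n)" by simp
  hence "b1*c1 \<in> pideal val 1" using pmono[of "b1*c1" "int n" 1] assms(2) by simp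
  from unit_plus_p[OF k(5) this] have "a1*d1 \<in> ounits val" by simp
  from prod_unit[OF k(1) k(4) this] show "d1 \<in> ounits val" by simp
qed

lemma cell_char:
  assumes n: "0 < n" and uf: "uf \<noteq> 0" "val uf = 1" and l: "l \<le> n"
    and cell: "in_cell val uf n t l (M2 A B C D)"
  shows "cellP n l C D"
proof -
  obtain z x v k where zv: "z \<noteq> 0" "v \<in> ounits val" "k \<in> K1 val n" and
    g: "M2 A B C D = zmat z \<cdot>\<^sub>m nmat x \<cdot>\<^sub>m amat (uf powi t) \<cdot>\<^sub>m wmat
              \<cdot>\<^sub>m nmat (uf powi (- int l) * v) \<cdot>\<^sub>m k"
    using cell unfolding in_cell_def by blast
  obtain a1 b1 c1 d1 where kk: "k = M2 a1 b1 c1 d1" by (cases k)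
  define u where "u = uf powi (- int l) * v"
  have CD: "C = -z*(a1+u*c1)" "D = -z*(b1+u*d1)"
    using g unfolding kk prod_eq u_def[symmetric] by auto
  note kf = K1_facts[OF zv(3)[unfolded kk] n]
  have u0: "u \<noteq> 0" and vu: "val u = - int l"
    using zv(2) uf unfolding u_def ounits_def by (auto simp: vmult vpowi)
  have upi: "u \<in> pideal val (- int l)" using vu by (simp add: pideal_def)
  have uc1: "u*c1 \<in> pideal val (int n - int l)" using pmult[OF upi kf(4)] by simp
  have ud1: "u*d1 \<noteq> 0" "val (u*d1) = - int l" using kf(2) u0 vu unfolding ounits_def by (auto simp: vmult)
  show ?thesis
  proof (cases "l = 0")
    case True
    have "u*c1 \<in> pideal val 1" using pmono[OF uc1] True n by simp
    from unit_plus_p[OF kf(1) this] have al: "a1+u*c1 \<in> ounits val" .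
    have be: "b1+u*d1 \<in> ointegers val" using kf(3) unit_int[OF kf(2)] True vu u0
      unfolding ointegers_def by (intro padd pmult[of _ 0 _ 0, simplified]) (auto simp: pideal_def)
    show ?thesis unfolding cellP_def using True al be zv(1) CD
      by (auto simp: ounits_def ointegers_def pideal_def vmult)
  next
    case False
    have beta: "b1 + u*d1 \<noteq> 0 \<and> val (b1 + u*d1) = - int l"
      using vstrict[OF ud1(1), of b1] ud1(2) kf(3) False unfolding ointegers_def pideal_def
      by (auto simp: add.commute)
    show ?thesis
    proof (cases "l = n")
      case True
      have "a1 + u*c1 \<in> pideal val 0"
        using padd[OF unit_int[OF kf(1), unfolded ointegers_def] pmono[OF uc1]] True by simp
      then show ?thesis unfolding cellP_def using True beta zv(1) CD n
        by (cases "a1 + u*c1 = 0") (auto simp: pideal_def vmult)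
    next
      case False2: False
      have "u*c1 \<in> pideal val 1" using pmono[OF uc1] False2 l by simp
      from unit_plus_p[OF kf(1) this] have al: "a1+u*c1 \<in> ounits val" .
      show ?thesis unfolding cellP_def using False False2 l al beta zv(1) CD
        by (auto simp: ounits_def vmult)
    qed
  qed
qed

end

lemma finish: "P = M2 A' B' C' D' \<Longrightarrow> mdet (M2 A' B' C' D') = A*D - B*C \<Longrightarrow> C' = C \<Longrightarrow> D' = D \<Longrightarrow>
   (A' = A \<and> C \<noteq> 0) \<or> (B' = B \<and> D \<noteq> 0) \<Longrightarrow> M2 A B C (D::'a::field) = P"
  by auto

context dv begin

lemma cell_intro: "z \<noteq> 0 \<Longrightarrow> v \<in> ounits val \<Longrightarrow> k \<in> K1 val n \<Longrightarrow>
   g = zmat z \<cdot>\<^sub>m nmat x \<cdot>\<^sub>m amat (uf powi t) \<cdot>\<^sub>m wmat \<cdot>\<^sub>m nmat (uf powi (- int l) * v) \<cdot>\<^sub>m k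
   \<Longrightarrow> in_cell val uf n t l g"
  unfolding in_cell_def by blast

lemma K1_intro: "a \<in> ointegers val \<Longrightarrow> b \<in> ointegers val \<Longrightarrow> c \<in> ointegers val \<Longrightarrow> d \<in> ointegers val
  \<Longrightarrow> a*d - b*c \<in> ounits val \<Longrightarrow> a - 1 \<in> pideal val (int n) \<Longrightarrow> c \<in> pideal val (int n)
  \<Longrightarrow> M2 a b c d \<in> K1 val n"
  unfolding K1_def Kmax_def by blast

lemma zero_p[simp]: "0 \<in> pideal val j" by (simp add: pideal_def)
lemma zero_o[simp]: "0 \<in> ointegers val" by (simp add: ointegers_def)
lemma one_o[simp]: "1 \<in> ointegers val" by (simp add: pideal_def ointegers_def)

lemma exist_i:
  assumes uf: "uf \<noteq> 0" "val uf = 1" and C: "C \<noteq> 0" "D = 0 \<or> val C \<le> val D"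
    and Dl: "A*D - B*C \<noteq> 0"
  shows "in_cell val uf n (val (A*D - B*C) - 2*val C) 0 (M2 A B C D)"
proof -
  define De where "De = A*D - B*C"
  define t where "t = val De - 2*val C"
  define y where "y = uf powi t"
  define d where "d = De / (C^2 * y)"
  define b1 where "b1 = D/C - d"
  have y0: "y \<noteq> 0" and vy: "val y = t" using uf by (auto simp: y_def vpowi)
  have d0: "d \<noteq> 0" using y0 C Dl by (simp add: d_def De_def)
  have vd: "val d = 0" using y0 C Dl vy
    by (simp add: d_def De_def vdiv vmult vpow t_def)
  have du: "d \<in> ounits val" using d0 vd by (simp add: ounits_def)
  have DC: "D/C \<in> ointegers val" using C by (cases "D = 0") (auto simp: ointegers_def pideal_def vdiv)
  have b1o: "b1 \<in> ointegers val" unfolding b1_def ointegers_def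
    using pdiff DC unit_int[OF du] unfolding ointegers_def by blast
  have K: "M2 1 b1 0 d \<in> K1 val n"
    by (rule K1_intro) (use b1o unit_int[OF du] du in auto)
  show ?thesis unfolding De_def[symmetric] t_def[symmetric]
  proof (rule cell_intro[OF _ unit1 K, of "-C" _ "A/C"])
    show "- C \<noteq> 0" using C by simp
    show "M2 A B C D = zmat (- C) \<cdot>\<^sub>m nmat (A / C) \<cdot>\<^sub>m amat (uf powi t) \<cdot>\<^sub>m wmat \<cdot>\<^sub>m nmat (uf powi - int 0 * 1) \<cdot>\<^sub>m M2 1 b1 0 d"
      unfolding y_def[symmetric]
      apply (rule finish[OF prod_eq])
      subgoal unfolding prod_det using C y0 by (simp add: d_def De_def field_simps power2_eq_square)
      subgoal by simp
      subgoal using C by (simp add: b1_def field_simps)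
      subgoal using C by simp
      done
  qed
qed

end

context dv begin

lemma exist_iii:
  assumes uf: "uf \<noteq> 0" "val uf = 1" and C: "C \<noteq> 0" "D \<noteq> 0" "val D < val C" "val C < val D + int n"
    and Dl: "A*D - B*C \<noteq> 0"
  shows "in_cell val uf n (val (A*D - B*C) - 2*val C) (nat (val C - val D)) (M2 A B C D)"
proof -
  define De where "De = A*D - B*C"
  define t where "t = val De - 2*val C"
  define y where "y = uf powi t"
  define d where "d = De / (C^2 * y)"
  define l where "l = nat (val C - val D)"
  define u where "u = D / (C * d)"
  define v where "v = u * uf ^ l"
  have y0: "y \<noteq> 0" and vy: "val y = t" using uf by (auto simp: y_def vpowi)
  have d0: "d \<noteq> 0" using y0 C Dl by (simp add: d_def De_def)
  have vd: "val d = 0" using y0 C Dl vy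
    by (simp add: d_def De_def vdiv vmult vpow t_def)
  have du: "d \<in> ounits val" using d0 vd by (simp add: ounits_def)
  have u0: "u \<noteq> 0" using C d0 by (simp add: u_def)
  have vu: "val u = val D - val C" using C d0 vd by (simp add: u_def vdiv vmult)
  have vu2: "v \<in> ounits val" using u0 uf vu C by (simp add: v_def ounits_def vmult vpow l_def)
  have uv: "uf powi (- int l) * v = u" using uf by (simp add: v_def power_int_minus)
  have K: "M2 1 0 0 d \<in> K1 val n"
    by (rule K1_intro) (use unit_int[OF du] du in auto)
  show ?thesis unfolding De_def[symmetric] t_def[symmetric] l_def[symmetric]
  proof (rule cell_intro[OF _ vu2 K, of "-C" _ "A/C"])
    show "- C \<noteq> 0" using C by simp
    show "M2 A B C D = zmat (- C) \<cdot>\<^sub>m nmat (A / C) \<cdot>\<^sub>m amat (uf powi t) \<cdot>\<^sub>m wmat \<cdot>\<^sub>m nmat (uf powi - int l * v) \<cdot>\<^sub>m M2 1 0 0 d"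
      unfolding y_def[symmetric] uv
      apply (rule finish[OF prod_eq])
      subgoal unfolding prod_det using C y0 by (simp add: d_def De_def field_simps power2_eq_square)
      subgoal by simp
      subgoal using C d0 by (simp add: u_def field_simps)
      subgoal using C by simp
      done
  qed
qed

lemma exist_ii:
  assumes uf: "uf \<noteq> 0" "val uf = 1" and C: "D \<noteq> 0" "C = 0 \<or> val C \<ge> val D + int n"
    and Dl: "A*D - B*C \<noteq> 0"
  shows "in_cell val uf n (val (A*D - B*C) - 2*val D - 2*int n) n (M2 A B C D)"
proof -
  define De where "De = A*D - B*C"
  define t where "t = val De - 2*val D - 2*int n"
  define y where "y = uf powi t"
  define d where "d = D^2 * uf^n * uf^n * y / De"
  define z where "z = - D * uf^n / d"
  define c1 where "c1 = C*d/D - uf^n"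
  define u where "u = inverse (uf ^ n)"
  define x where "x = (y - B/(z*d)) * uf^n"
  have y0: "y \<noteq> 0" and vy: "val y = t" using uf by (auto simp: y_def vpowi)
  have d0: "d \<noteq> 0" using y0 C Dl uf by (simp add: d_def De_def)
  have vd: "val d = 0" using y0 C Dl vy uf
    by (simp add: d_def De_def vdiv vmult vpow t_def)
  have du: "d \<in> ounits val" using d0 vd by (simp add: ounits_def)
  have z0: "z \<noteq> 0" using C d0 uf by (simp add: z_def)
  have uv: "uf powi (- int n) * 1 = u" using uf by (simp add: u_def power_int_minus)
  have CdD: "C*d/D \<in> pideal val (int n)" using C d0 vd
    by (cases "C = 0") (auto simp: pideal_def vdiv vmult)
  have ufn: "uf^n \<in> pideal val (int n)" using uf by (simp add: pideal_def vpow)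
  have c1p: "c1 \<in> pideal val (int n)" unfolding c1_def by (rule pdiff[OF CdD ufn])
  have c1o: "c1 \<in> ointegers val" using pmono[OF c1p] unfolding ointegers_def by simp
  have K: "M2 1 0 c1 d \<in> K1 val n"
    by (rule K1_intro) (use unit_int[OF du] du c1o c1p in auto)
  show ?thesis unfolding De_def[symmetric] t_def[symmetric]
  proof (rule cell_intro[OF z0 unit1 K, of _ x])
    show "M2 A B C D = zmat z \<cdot>\<^sub>m nmat x \<cdot>\<^sub>m amat (uf powi t) \<cdot>\<^sub>m wmat \<cdot>\<^sub>m nmat (uf powi - int n * 1) \<cdot>\<^sub>m M2 1 0 c1 d"
      unfolding y_def[symmetric] uv
      apply (rule finish[OF prod_eq])
      subgoal unfolding prod_det using C y0 d0 uf Dl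
        by (simp add: d_def z_def De_def field_simps power2_eq_square)
      subgoal using C d0 uf by (simp add: z_def u_def c1_def field_simps)
      subgoal using C d0 uf by (simp add: z_def u_def field_simps)
      subgoal using C d0 uf z0 by (simp add: x_def u_def field_simps)
      done
  qed
qed

end

context dv begin

lemma exists_cell:
  assumes n: "0 < n" and uf: "uf \<noteq> 0" "val uf = 1" and det: "A*D - B*C \<noteq> 0"
  shows "\<exists>l t. l \<le> n \<and> in_cell val uf n t l (M2 A B C D)"
proof (cases "C \<noteq> 0 \<and> (D = 0 \<or> val C \<le> val D)")
  case True
  then show ?thesis using exist_i[OF uf _ _ det] by blast
next
  case F1: False
  show ?thesis
  proof (cases "D \<noteq> 0 \<and> (C = 0 \<or> val C \<ge> val D + int n)")
    case True
    then show ?thesis using exist_ii[OF uf _ _ det] by blast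
  next
    case False
    have "C \<noteq> 0" using False det by auto
    moreover have "D \<noteq> 0" using F1 calculation by auto
    ultimately show ?thesis using False F1 exist_iii[OF uf _ _ _ _ det, of n] by fastforce
  qed
qed

lemma lval_char:
  assumes n: "0 < n" and uf: "uf \<noteq> 0" "val uf = 1" and det: "A*D - B*C \<noteq> 0"
  shows "cellP n (lval val uf n (M2 A B C D)) C D"
proof -
  obtain l t where lt: "l \<le> n" "in_cell val uf n t l (M2 A B C D)"
    using exists_cell[OF n uf det] by blast
  have cl: "cellP n l C D" using cell_char[OF n uf lt] .
  have "lval val uf n (M2 A B C D) = l"
    unfolding lval_def
  proof (rule the_equality)
    show "l \<le> n \<and> (\<exists>t. in_cell val uf n t l (M2 A B C D))" using lt by blast
    fix l' assume "l' \<le> n \<and> (\<exists>t. in_cell val uf n t l' (M2 A B C D))"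
    then obtain t' where "l' \<le> n" "in_cell val uf n t' l' (M2 A B C D)" by blast
    from cell_char[OF n uf this] cellP_unique[OF n _ cl] show "l' = l" by blast
  qed
  with cl show ?thesis by simp
qed

lemma NoK0p_char:
  assumes k: "M2 a b c d \<in> Kmax val"
  shows "M2 a b c d \<in> NoK0p val \<longleftrightarrow> d \<in> ounits val"
proof
  assume "M2 a b c d \<in> NoK0p val"
  then obtain x k' where xk: "x \<in> ointegers val" "k' \<in> K0p val" "M2 a b c d = nmat x \<cdot>\<^sub>m k'"
    unfolding NoK0p_def by blast
  then obtain a' b' c' d' where k': "k' = M2 a' b' c' d'" "M2 a' b' c' d' \<in> Kmax val" "b' \<in> pideal val 1"
    unfolding K0p_def by blast
  have dd: "d = d'" using xk(3) k'(1) by (simp add: nmat_def)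
  from k'(2) have e: "a' \<in> ointegers val" "c' \<in> ointegers val" "d' \<in> ointegers val" "a'*d' - b'*c' \<in> ounits val"
    unfolding Kmax_def by auto
  have bc: "b'*c' \<in> pideal val 1" using pmult[OF k'(3) e(2)[unfolded ointegers_def]] by simp
  have "a'*d' - b'*c' + b'*c' \<in> ounits val" by (rule unit_plus_p[OF e(4) bc])
  hence "a'*d' \<in> ounits val" by simp
  from prod_unit[OF e(1) e(3) this] dd show "d \<in> ounits val" by simp
next
  assume du: "d \<in> ounits val"
  from k have e: "a \<in> ointegers val" "b \<in> ointegers val" "c \<in> ointegers val" "d \<in> ointegers val"
    "a*d - b*c \<in> ounits val" unfolding Kmax_def by auto
  define x where "x = b / d"
  have d0: "d \<noteq> 0" "val d = 0" using du by (auto simp: ounits_def)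
  have xo: "x \<in> ointegers val" using e(2) d0 unfolding x_def ointegers_def pideal_def
    by (cases "b = 0") (auto simp: vdiv)
  have axc: "a - x*c \<in> ointegers val" using pdiff[OF e(1)[unfolded ointegers_def]
       pmult[OF xo[unfolded ointegers_def] e(3)[unfolded ointegers_def], simplified]]
    by (simp add: ointegers_def)
  have "(a - x*c)*d - 0*c = a*d - b*c" using d0 by (simp add: x_def field_simps)
  hence "M2 (a - x*c) 0 c d \<in> Kmax val" using axc e unfolding Kmax_def by auto
  hence K0: "M2 (a - x*c) 0 c d \<in> K0p val" unfolding K0p_def by auto
  have "M2 a b c d = nmat x \<cdot>\<^sub>m M2 (a - x*c) 0 c d" using d0 by (simp add: nmat_def x_def)
  with K0 xo show "M2 a b c d \<in> NoK0p val" unfolding NoK0p_def by blast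
qed

lemma wK0p_char:
  assumes k: "M2 a b c d \<in> Kmax val"
  shows "M2 a b c d \<in> wK0p val \<longleftrightarrow> d \<in> pideal val 1"
proof
  assume "M2 a b c d \<in> wK0p val"
  then obtain k' where xk: "k' \<in> K0p val" "M2 a b c d = wmat \<cdot>\<^sub>m k'"
    unfolding wK0p_def by blast
  then obtain a' b' c' d' where k': "k' = M2 a' b' c' d'" "b' \<in> pideal val 1"
    unfolding K0p_def by blast
  have "d = - b'" using xk(2) k'(1) by (simp add: wmat_def)
  with pneg[OF k'(2)] show "d \<in> pideal val 1" by simp
next
  assume dp: "d \<in> pideal val 1"
  from k have e: "a \<in> ointegers val" "b \<in> ointegers val" "c \<in> ointegers val" "d \<in> ointegers val"
    "a*d - b*c \<in> ounits val" unfolding Kmax_def by auto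
  have "(-c)*b - (-d)*a = a*d - b*c" by (simp add: algebra_simps)
  hence "M2 (-c) (-d) a b \<in> Kmax val" using e pneg unfolding Kmax_def ointegers_def
    by (auto simp: mult.commute)
  hence K0: "M2 (-c) (-d) a b \<in> K0p val" using pneg[OF dp] unfolding K0p_def by auto
  have "M2 a b c d = wmat \<cdot>\<^sub>m M2 (-c) (-d) a b" by (simp add: wmat_def)
  with K0 show "M2 a b c d \<in> wK0p val" unfolding wK0p_def by blast
qed

end

theorem lemma2p1:
  fixes val :: "'a::field_char_0 \<Rightarrow> int" and uf :: 'a and n :: nat and k :: "'a m2"
  assumes F: "nonarch_local_field val"
    and unif: "uf \<noteq> 0" "val uf = 1"
    and n: "odd n" "0 < n"
    and kK: "k \<in> Kmax val"
  defines "n1 \<equiv> (n + 1) div 2" and "n0 \<equiv> n div 2"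
  shows "(n1 \<le> lval val uf n (k \<cdot>\<^sub>m amat (uf ^ n1)) \<longleftrightarrow> k \<in> NoK0p val) \<and>
         (lval val uf n (k \<cdot>\<^sub>m amat (uf ^ n1)) \<le> n0 \<longleftrightarrow> k \<in> wK0p val)"
proof -
  interpret dv val using F unfolding nonarch_local_field_def by unfold_locales blast
  obtain a b c d where kk: "k = M2 a b c d" by (cases k)
  from kK have e: "a \<in> ointegers val" "b \<in> ointegers val" "c \<in> ointegers val" "d \<in> ointegers val"
    "a*d - b*c \<in> ounits val" unfolding kk Kmax_def by auto
  have n1: "n1 = n0 + 1" "1 \<le> n1" "n1 \<le> n" using n unfolding n1_def n0_def by presburger+
  have g: "k \<cdot>\<^sub>m amat (uf ^ n1) = M2 (a*uf^n1) b (c*uf^n1) d" by (simp add: kk amat_def)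
  have "a*uf^n1*d - b*(c*uf^n1) = (a*d - b*c) * uf^n1" by (simp add: algebra_simps)
  hence det: "a*uf^n1*d - b*(c*uf^n1) \<noteq> 0" using e(5) unif by (simp add: ounits_def)
  define L where "L = lval val uf n (k \<cdot>\<^sub>m amat (uf ^ n1))"
  have cp: "cellP n L (c*uf^n1) d" unfolding L_def g by (rule lval_char[OF n(2) unif det])
  have vC: "c \<noteq> 0 \<Longrightarrow> val (c*uf^n1) = val c + int n1" using unif by (simp add: vmult vpow)
  have claim: "n1 \<le> L \<longleftrightarrow> d \<in> ounits val"
  proof
    assume "n1 \<le> L"
    show "d \<in> ounits val"
    proof (rule ccontr)
      assume "d \<notin> ounits val"
      hence dp: "d \<in> pideal val 1" using o_split[OF e(4)] by blast
      have "a*d \<in> pideal val (0+1)" using pmult[OF e(1)[unfolded ointegers_def] dp] .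
      hence "- (a*d) \<in> pideal val 1" using pneg by simp
      from unit_plus_p[OF e(5) this] have "b*c \<in> ounits val"
        by (simp add: ounits_def)
      from prod_unit[OF e(2) e(3) this] have cu: "c \<in> ounits val" by simp
      hence c0: "c \<noteq> 0" "val c = 0" by (auto simp: ounits_def)
      have vc: "val (c*uf^n1) = int n1" using vC[OF c0(1)] c0 by simp
      have cne: "c*uf^n1 \<noteq> 0" using c0 unif by simp
      have vd: "d \<noteq> 0 \<Longrightarrow> 1 \<le> val d" using dp by (simp add: pideal_def)
      from cp[unfolded cellP_def] show False
      proof (elim disjE)
        assume "L = 0 \<and> c * uf ^ n1 \<noteq> 0 \<and> (d = 0 \<or> val (c * uf ^ n1) \<le> val d)"
        then show False using \<open>n1 \<le> L\<close> n1 by linarith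
      next
        assume "L = n \<and> d \<noteq> 0 \<and> (c * uf ^ n1 = 0 \<or> val d + int n \<le> val (c * uf ^ n1))"
        then show False using vd vc cne n1 by linarith
      next
        assume "0 < L \<and> L < n \<and> c * uf ^ n1 \<noteq> 0 \<and> d \<noteq> 0 \<and> val (c * uf ^ n1) = val d + int L"
        then show False using vd vc \<open>n1 \<le> L\<close> by linarith
      qed
    qed
  next
    assume du: "d \<in> ounits val"
    hence d0: "d \<noteq> 0" "val d = 0" by (auto simp: ounits_def)
    show "n1 \<le> L"
    proof -
      have vc: "c \<noteq> 0 \<Longrightarrow> 0 \<le> val c" using e(3) by (simp add: ointegers_def pideal_def)
      have cz: "c*uf^n1 \<noteq> 0 \<Longrightarrow> c \<noteq> 0" by auto
      from cp[unfolded cellP_def] show ?thesis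
      proof (elim disjE)
        assume "L = 0 \<and> c * uf ^ n1 \<noteq> 0 \<and> (d = 0 \<or> val (c * uf ^ n1) \<le> val d)"
        then show ?thesis using vc cz vC d0 n1 by fastforce
      next
        assume "L = n \<and> d \<noteq> 0 \<and> (c * uf ^ n1 = 0 \<or> val d + int n \<le> val (c * uf ^ n1))"
        then show ?thesis using n1 by simp
      next
        assume "0 < L \<and> L < n \<and> c * uf ^ n1 \<noteq> 0 \<and> d \<noteq> 0 \<and> val (c * uf ^ n1) = val d + int L"
        then show ?thesis using vc cz vC d0 by fastforce
      qed
    qed
  qed
  have dsplit: "d \<in> pideal val 1 \<longleftrightarrow> \<not> d \<in> ounits val"
    using o_split[OF e(4)] unit_not_p1 by blast
  have A: "k \<in> NoK0p val \<longleftrightarrow> d \<in> ounits val" using NoK0p_char[OF kK[unfolded kk]] kk by simp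
  have B: "k \<in> wK0p val \<longleftrightarrow> d \<in> pideal val 1" using wK0p_char[OF kK[unfolded kk]] kk by simp
  have "L \<le> n0 \<longleftrightarrow> \<not> n1 \<le> L" using n1(1) by linarith
  hence "(n1 \<le> L \<longleftrightarrow> k \<in> NoK0p val) \<and> (L \<le> n0 \<longleftrightarrow> k \<in> wK0p val)"
    using claim dsplit A B by blast
  thus ?thesis unfolding L_def .
qed

end
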